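(* Let $B_\tau=1$, $C_\tau=\tau$ and $\bar{B}_\tau=B_\tau(1-C_\tau)=1-\tau$. Suppose $\bar{A}_{\tau,\sigma}$ has the form $$\bar{A}_{\tau,\sigma}=\alpha_{(0,0)}-\tfrac12\xi_1P_1(\sigma)+\tfrac12\xi_1P_1(\tau)+\sum_{\substack{i+j\ \text{even}\\ i+j>1}}\alpha_{(i,j)}P_i(\tau)P_j(\sigma),\qquad \tau,\sigma\in[0,1],$$ where $\xi_\iota=\frac{1}{2\sqrt{4\iota^2-1}}$ (so $\xi_1=\frac{1}{2\sqrt3}$) and the $\alpha_{(i,j)}$ are arbitrary real numbers (for which the series converges, e.g. only finitely many nonzero). Then the csRKN method $(\bar{A}_{\tau,\sigma},\bar{B}_\tau,B_\tau,C_\tau)$ is symmetric.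
   Context: Consider $q''=f(t,q)$, $q(t_0)=q_0$, $q'(t_0)=q'_0$ with $f:\mathbb{R}\times\mathbb{R}^d\to\mathbb{R}^d$ smooth. The csRKN method with coefficients $(\bar{A}_{\tau,\sigma},\bar{B}_\tau,B_\tau,C_\tau)$ and step size $h$ is $$Q_\tau=q_0+hC_\tau q'_0+h^2\int_0^1\bar{A}_{\tau,\sigma}f(t_0+C_\sigma h,Q_\sigma)\,d\sigma,\ \tau\in[0,1],$$ $$q_1=q_0+hq'_0+h^2\int_0^1\bar{B}_\tau f(t_0+C_\tau h,Q_\tau)\,d\tau,\qquad q'_1=q'_0+h\int_0^1 B_\tau f(t_0+C_\tau h,Q_\tau)\,d\tau.$$ A one-step method $\Phi_h$ is symmetric if $\Phi_h=\Phi_{-h}^{-1}$, i.e. exchanging $h\leftrightarrow-h$, $(q_0,q_0')\leftrightarrow(q_1,q_1')$, $t_0\leftrightarrow t_1=t_0+h$ leaves the method unaltered. $P_k$ denotes the normalized shifted Legendre polynomial on $[0,1]$: $P_0(x)=1$, $P_k(x)=\frac{\sqrt{2k+1}}{k!}\frac{d^k}{dx^k}[(x^2-x)^k]$, so that $\int_0^1P_jP_k\,dx=\delta_{jk}$; e.g. $P_1(x)=\sqrt3(2x-1)$, $P_2(x)=\sqrt5(6x^2-6x+1)$. *)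

theory Defs
  imports "HOL-Analysis.Analysis"
begin

text \<open>Normalized shifted Legendre polynomial on [0,1] via the Rodrigues formula:
  P_0 = 1, P_k(x) = sqrt(2k+1)/k! * d^k/dx^k [(x^2-x)^k].\<close>
definition legP :: "nat \<Rightarrow> real \<Rightarrow> real" where
  "legP k x = sqrt (2 * real k + 1) / fact k * ((deriv ^^ k) (\<lambda>y. (y\<^sup>2 - y) ^ k)) x"

definition xi :: "nat \<Rightarrow> real" where
  "xi \<iota> = 1 / (2 * sqrt (4 * (real \<iota>)\<^sup>2 - 1))"

text \<open>One step of the csRKN method (Abar, Bbar, B, C) for q'' = f(t,q), from (t0,q0,q0')
  with step size h, producing (q1,q1').\<close>
definition csRKN_step ::
  "(real \<Rightarrow> real \<Rightarrow> real) \<Rightarrow> (real \<Rightarrow> real) \<Rightarrow> (real \<Rightarrow> real) \<Rightarrow> (real \<Rightarrow> real)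
   \<Rightarrow> (real \<Rightarrow> 'a::euclidean_space \<Rightarrow> 'a) \<Rightarrow> real \<Rightarrow> real \<Rightarrow> 'a \<Rightarrow> 'a \<Rightarrow> 'a \<Rightarrow> 'a \<Rightarrow> bool"
where
  "csRKN_step Abar Bbar B C f t0 h q0 p0 q1 p1 \<longleftrightarrow>
    (\<exists>Q :: real \<Rightarrow> 'a.
      (\<forall>\<tau>\<in>{0..1}.
         (\<lambda>\<sigma>. Abar \<tau> \<sigma> *\<^sub>R f (t0 + C \<sigma> * h) (Q \<sigma>)) integrable_on {0..1} \<and>
         Q \<tau> = q0 + (h * C \<tau>) *\<^sub>R p0
                + h\<^sup>2 *\<^sub>R integral {0..1} (\<lambda>\<sigma>. Abar \<tau> \<sigma> *\<^sub>R f (t0 + C \<sigma> * h) (Q \<sigma>))) \<and>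
      (\<lambda>\<tau>. Bbar \<tau> *\<^sub>R f (t0 + C \<tau> * h) (Q \<tau>)) integrable_on {0..1} \<and>
      (\<lambda>\<tau>. B \<tau> *\<^sub>R f (t0 + C \<tau> * h) (Q \<tau>)) integrable_on {0..1} \<and>
      q1 = q0 + h *\<^sub>R p0 + h\<^sup>2 *\<^sub>R integral {0..1} (\<lambda>\<tau>. Bbar \<tau> *\<^sub>R f (t0 + C \<tau> * h) (Q \<tau>)) \<and>
      p1 = p0 + h *\<^sub>R integral {0..1} (\<lambda>\<tau>. B \<tau> *\<^sub>R f (t0 + C \<tau> * h) (Q \<tau>)))"

text \<open>Symmetry Phi_h = Phi_{-h}^{-1}: exchanging h <-> -h, (q0,q0') <-> (q1,q1'),
  t0 <-> t1 = t0 + h leaves the method unaltered.\<close>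
definition csRKN_symmetric ::
  "(real \<Rightarrow> real \<Rightarrow> real) \<Rightarrow> (real \<Rightarrow> real) \<Rightarrow> (real \<Rightarrow> real) \<Rightarrow> (real \<Rightarrow> real)
   \<Rightarrow> (real \<Rightarrow> 'a::euclidean_space \<Rightarrow> 'a) \<Rightarrow> bool"
where
  "csRKN_symmetric Abar Bbar B C f \<longleftrightarrow>
    (\<forall>t0 h q0 p0 q1 p1.
       csRKN_step Abar Bbar B C f t0 h q0 p0 q1 p1 \<longleftrightarrow>
       csRKN_step Abar Bbar B C f (t0 + h) (- h) q1 p1 q0 p0)"

end

theory Submission
  imports Defs "HOL-Computational_Algebra.Polynomial"
begin

lemma refl01:
  fixes g :: "real \<Rightarrow> 'a::euclidean_space"
  assumes "(g has_integral I) {0..1}"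
  shows "((\<lambda>x. g (1 - x)) has_integral I) {0..1}"
proof -
  have "(g has_integral I) (cbox 0 1)" using assms by simp
  from has_integral_affinity[OF this, of "-1" 1]
  have "((\<lambda>x. g (- x + 1)) has_integral I) ((\<lambda>x. - x + 1) ` cbox 0 1)" by simp
  moreover have "(\<lambda>x::real. - x + 1) ` cbox 0 1 = {0..1}"
  proof
    show "{0..1} \<subseteq> (\<lambda>x::real. - x + 1) ` cbox 0 1"
      by (auto intro!: image_eqI[where x="1 - _"])
  qed auto
  ultimately show ?thesis by simp
qed

lemma poly_sym:
  fixes p :: "real poly"
  assumes "\<And>x. poly p (1 - x) = s * poly p x"
  shows "poly (pderiv p) (1 - x) = - s * poly (pderiv p) x"
proof -
  have d1: "((\<lambda>x. poly p (1 - x)) has_real_derivative (poly (pderiv p) (1 - x) * -1)) (at x)"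
    by (rule DERIV_chain2[OF poly_DERIV]) (auto intro!: derivative_eq_intros)
  have d2: "((\<lambda>x. s * poly p x) has_real_derivative (s * poly (pderiv p) x)) (at x)"
    by (auto intro!: derivative_eq_intros)
  from d1 have "((\<lambda>x. s * poly p x) has_real_derivative (poly (pderiv p) (1 - x) * -1)) (at x)"
    using assms by simp
  from DERIV_unique[OF this d2] show ?thesis by simp
qed

lemma deriv_iter_poly: "(deriv ^^ n) (poly (p::real poly)) = poly ((pderiv ^^ n) p)"
proof (induction n arbitrary: p)
  case (Suc n)
  have "deriv (poly q) = poly (pderiv q)" for q :: "real poly"
    by (rule ext, rule DERIV_imp_deriv, rule poly_DERIV)
  then show ?case by (simp add: Suc)
qed simp

lemma poly_sym_iter:
  fixes p :: "real poly"
  assumes "\<And>x. poly p (1 - x) = poly p x"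
  shows "poly ((pderiv ^^ n) p) (1 - x) = (-1)^n * poly ((pderiv ^^ n) p) x"
proof (induction n arbitrary: x)
  case (Suc n)
  then show ?case using poly_sym[of "(pderiv ^^ n) p" "(-1)^n"] by simp
qed (simp add: assms)

lemma legP_refl: "legP k (1 - x) = (-1)^k * legP k x"
proof -
  have e: "(\<lambda>y::real. (y\<^sup>2 - y) ^ k) = poly ([:0, -1, 1:] ^ k)"
    by (rule ext) (simp add: power2_eq_square algebra_simps)
  have s: "poly ([:0, -1, 1:] ^ k) (1 - x) = poly ([:0, -1, 1:] ^ k) x" for x :: real
    by (simp add: algebra_simps)
  show ?thesis unfolding legP_def e deriv_iter_poly
    using poly_sym_iter[OF s, of k x] by simp
qed

lemma legP1: "legP 1 x = sqrt 3 * (2 * x - 1)"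
proof -
  have "deriv (\<lambda>y::real. (y\<^sup>2 - y)) x = 2 * x - 1"
    by (rule DERIV_imp_deriv) (auto intro!: derivative_eq_intros)
  then show ?thesis by (simp add: legP_def)
qed

lemma xi1: "xi 1 = 1 / (2 * sqrt 3)" by (simp add: xi_def)

lemma step_rev:
  fixes f :: "real \<Rightarrow> 'a::euclidean_space \<Rightarrow> 'a"
  assumes sym: "\<And>\<tau> \<sigma>. \<tau> \<in> {0..1} \<Longrightarrow> \<sigma> \<in> {0..1} \<Longrightarrow> Abar (1 - \<tau>) \<sigma> = 1 - \<sigma> - \<tau> + Abar \<tau> (1 - \<sigma>)"
    and st: "csRKN_step Abar (\<lambda>\<tau>. 1 - \<tau>) (\<lambda>\<tau>. 1) (\<lambda>\<tau>. \<tau>) f t0 h q0 p0 q1 p1"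
  shows "csRKN_step Abar (\<lambda>\<tau>. 1 - \<tau>) (\<lambda>\<tau>. 1) (\<lambda>\<tau>. \<tau>) f (t0 + h) (- h) q1 p1 q0 p0"
proof -
  obtain Q where
    stage: "\<And>\<tau>. \<tau>\<in>{0..1} \<Longrightarrow>
         (\<lambda>\<sigma>. Abar \<tau> \<sigma> *\<^sub>R f (t0 + \<sigma> * h) (Q \<sigma>)) integrable_on {0..1} \<and>
         Q \<tau> = q0 + (h * \<tau>) *\<^sub>R p0
                + h\<^sup>2 *\<^sub>R integral {0..1} (\<lambda>\<sigma>. Abar \<tau> \<sigma> *\<^sub>R f (t0 + \<sigma> * h) (Q \<sigma>))"
    and i1: "(\<lambda>\<tau>. (1 - \<tau>) *\<^sub>R f (t0 + \<tau> * h) (Q \<tau>)) integrable_on {0..1}"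
    and iF: "(\<lambda>\<tau>. 1 *\<^sub>R f (t0 + \<tau> * h) (Q \<tau>)) integrable_on {0..1}"
    and q1: "q1 = q0 + h *\<^sub>R p0 + h\<^sup>2 *\<^sub>R integral {0..1} (\<lambda>\<tau>. (1 - \<tau>) *\<^sub>R f (t0 + \<tau> * h) (Q \<tau>))"
    and p1: "p1 = p0 + h *\<^sub>R integral {0..1} (\<lambda>\<tau>. 1 *\<^sub>R f (t0 + \<tau> * h) (Q \<tau>))"
    using st unfolding csRKN_step_def by blast
  define F where "F \<sigma> = f (t0 + \<sigma> * h) (Q \<sigma>)" for \<sigma>
  define I1 where "I1 = integral {0..1} (\<lambda>\<tau>. (1 - \<tau>) *\<^sub>R F \<tau>)"
  define IF where "IF = integral {0..1} F"
  have hI1: "((\<lambda>\<tau>. (1 - \<tau>) *\<^sub>R F \<tau>) has_integral I1) {0..1}"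
    using i1 unfolding I1_def F_def by (simp add: has_integral_integral)
  have hIF: "(F has_integral IF) {0..1}"
    using iF unfolding IF_def F_def by (simp add: has_integral_integral)
  have q1': "q1 = q0 + h *\<^sub>R p0 + h\<^sup>2 *\<^sub>R I1" using q1 unfolding I1_def F_def by simp
  have p1': "p1 = p0 + h *\<^sub>R IF" using p1 unfolding IF_def F_def by simp
  have fe: "f (t0 + h + \<sigma> * - h) (Q (1 - \<sigma>)) = F (1 - \<sigma>)" for \<sigma>
    unfolding F_def by (simp add: algebra_simps)
  have hT: "((\<lambda>\<tau>. \<tau> *\<^sub>R F \<tau>) has_integral (IF - I1)) {0..1}"
  proof -
    have "((\<lambda>\<tau>. F \<tau> - (1 - \<tau>) *\<^sub>R F \<tau>) has_integral (IF - I1)) {0..1}"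
      by (rule has_integral_diff[OF hIF hI1])
    then show ?thesis by (simp add: algebra_simps)
  qed
  have rB: "((\<lambda>\<tau>. (1 - \<tau>) *\<^sub>R F (1 - \<tau>)) has_integral (IF - I1)) {0..1}"
    using refl01[OF hT] by simp
  have rF: "((\<lambda>\<tau>. 1 *\<^sub>R F (1 - \<tau>)) has_integral IF) {0..1}"
    using refl01[OF hIF] by simp
  have stg: "(\<lambda>\<sigma>. Abar \<tau> \<sigma> *\<^sub>R f (t0 + h + \<sigma> * - h) (Q (1 - \<sigma>))) integrable_on {0..1} \<and>
         Q (1 - \<tau>) = q1 + (- h * \<tau>) *\<^sub>R p1
                + (- h)\<^sup>2 *\<^sub>R integral {0..1} (\<lambda>\<sigma>. Abar \<tau> \<sigma> *\<^sub>R f (t0 + h + \<sigma> * - h) (Q (1 - \<sigma>)))"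
    if \<tau>: "\<tau> \<in> {0..1}" for \<tau>
  proof -
    have t': "1 - \<tau> \<in> {0..1}" using \<tau> by auto
    define J where "J = integral {0..1} (\<lambda>\<sigma>. Abar (1 - \<tau>) \<sigma> *\<^sub>R F \<sigma>)"
    have hJ: "((\<lambda>\<sigma>. Abar (1 - \<tau>) \<sigma> *\<^sub>R F \<sigma>) has_integral J) {0..1}"
      using stage[OF t'] unfolding J_def F_def by (simp add: has_integral_integral)
    have Qt: "Q (1 - \<tau>) = q0 + (h * (1 - \<tau>)) *\<^sub>R p0 + h\<^sup>2 *\<^sub>R J"
      using stage[OF t'] unfolding J_def F_def by simp
    have "((\<lambda>\<sigma>. Abar (1 - \<tau>) \<sigma> *\<^sub>R F \<sigma> - (1 - \<sigma>) *\<^sub>R F \<sigma> + \<tau> *\<^sub>R F \<sigma>) has_integral (J - I1 + \<tau> *\<^sub>R IF)) {0..1}"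
      by (intro has_integral_add has_integral_diff hJ hI1 has_integral_cmul hIF)
    then have "((\<lambda>\<sigma>. Abar \<tau> (1 - \<sigma>) *\<^sub>R F \<sigma>) has_integral (J - I1 + \<tau> *\<^sub>R IF)) {0..1}"
    proof (rule has_integral_eq[rotated])
      fix \<sigma> :: real assume "\<sigma> \<in> {0..1}"
      then have "Abar (1 - \<tau>) \<sigma> = 1 - \<sigma> - \<tau> + Abar \<tau> (1 - \<sigma>)" using sym \<tau> by blast
      then have e: "Abar (1 - \<tau>) \<sigma> - (1 - \<sigma>) + \<tau> = Abar \<tau> (1 - \<sigma>)" by linarith
      have "Abar (1 - \<tau>) \<sigma> *\<^sub>R F \<sigma> - (1 - \<sigma>) *\<^sub>R F \<sigma> + \<tau> *\<^sub>R F \<sigma> = (Abar (1 - \<tau>) \<sigma> - (1 - \<sigma>) + \<tau>) *\<^sub>R F \<sigma>"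
        by (simp add: scaleR_left_diff_distrib scaleR_left_distrib)
      then show "Abar (1 - \<tau>) \<sigma> *\<^sub>R F \<sigma> - (1 - \<sigma>) *\<^sub>R F \<sigma> + \<tau> *\<^sub>R F \<sigma> = Abar \<tau> (1 - \<sigma>) *\<^sub>R F \<sigma>"
        by (simp only: e)
    qed
    note r = refl01[OF this]
    have hK: "((\<lambda>\<sigma>. Abar \<tau> \<sigma> *\<^sub>R f (t0 + h + \<sigma> * - h) (Q (1 - \<sigma>))) has_integral (J - I1 + \<tau> *\<^sub>R IF)) {0..1}"
      unfolding fe using r by simp
    show ?thesis
    proof
      show "(\<lambda>\<sigma>. Abar \<tau> \<sigma> *\<^sub>R f (t0 + h + \<sigma> * - h) (Q (1 - \<sigma>))) integrable_on {0..1}"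
        using hK by blast
      show "Q (1 - \<tau>) = q1 + (- h * \<tau>) *\<^sub>R p1
                + (- h)\<^sup>2 *\<^sub>R integral {0..1} (\<lambda>\<sigma>. Abar \<tau> \<sigma> *\<^sub>R f (t0 + h + \<sigma> * - h) (Q (1 - \<sigma>)))"
        unfolding integral_unique[OF hK] Qt q1' p1'
        by (simp add: algebra_simps power2_eq_square)
    qed
  qed
  show ?thesis unfolding csRKN_step_def
  proof (intro exI[of _ "\<lambda>\<sigma>. Q (1 - \<sigma>)"] conjI ballI)
    show "(\<lambda>\<tau>. (1 - \<tau>) *\<^sub>R f (t0 + h + \<tau> * - h) (Q (1 - \<tau>))) integrable_on {0..1}"
      unfolding fe using rB by (rule has_integral_integrable)
    show "(\<lambda>\<tau>. 1 *\<^sub>R f (t0 + h + \<tau> * - h) (Q (1 - \<tau>))) integrable_on {0..1}"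
      unfolding fe using rF by (rule has_integral_integrable)
    show "q0 = q1 + - h *\<^sub>R p1 + (- h)\<^sup>2 *\<^sub>R integral {0..1} (\<lambda>\<tau>. (1 - \<tau>) *\<^sub>R f (t0 + h + \<tau> * - h) (Q (1 - \<tau>)))"
      unfolding fe integral_unique[OF rB] q1' p1' by (simp add: algebra_simps power2_eq_square)
    show "p0 = p1 + - h *\<^sub>R integral {0..1} (\<lambda>\<tau>. 1 *\<^sub>R f (t0 + h + \<tau> * - h) (Q (1 - \<tau>)))"
      using integral_unique[OF rF] unfolding fe p1' by simp
  qed (use stg in auto)
qed


theorem theorem3p3:
  fixes Abar :: "real \<Rightarrow> real \<Rightarrow> real"
    and \<alpha> :: "nat \<times> nat \<Rightarrow> real"
    and f :: "real \<Rightarrow> real ^ 'd \<Rightarrow> real ^ 'd"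
  assumes summ: "\<And>\<tau> \<sigma>. \<tau> \<in> {0..1} \<Longrightarrow> \<sigma> \<in> {0..1} \<Longrightarrow>
      (\<lambda>(i, j). \<alpha> (i, j) * legP i \<tau> * legP j \<sigma>) summable_on {(i, j). even (i + j) \<and> i + j > 1}"
    and Aform: "\<And>\<tau> \<sigma>. \<tau> \<in> {0..1} \<Longrightarrow> \<sigma> \<in> {0..1} \<Longrightarrow>
      Abar \<tau> \<sigma> = \<alpha> (0, 0) - 1/2 * xi 1 * legP 1 \<sigma> + 1/2 * xi 1 * legP 1 \<tau>
        + (\<Sum>\<^sub>\<infinity>(i, j)\<in>{(i, j). even (i + j) \<and> i + j > 1}. \<alpha> (i, j) * legP i \<tau> * legP j \<sigma>)"
  shows "csRKN_symmetric Abar (\<lambda>\<tau>. 1 - \<tau>) (\<lambda>\<tau>. 1) (\<lambda>\<tau>. \<tau>) f"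
  proof -
  have sym: "Abar (1 - \<tau>) \<sigma> = 1 - \<sigma> - \<tau> + Abar \<tau> (1 - \<sigma>)"
    if t: "\<tau> \<in> {0..1}" and s: "\<sigma> \<in> {0..1}" for \<tau> \<sigma>
  proof -
    have t': "1 - \<tau> \<in> {0..1}" and s': "1 - \<sigma> \<in> {0..1}" using t s by auto
    have S: "(\<Sum>\<^sub>\<infinity>(i, j)\<in>{(i, j). even (i + j) \<and> i + j > 1}. \<alpha> (i, j) * legP i (1 - \<tau>) * legP j \<sigma>)
           = (\<Sum>\<^sub>\<infinity>(i, j)\<in>{(i, j). even (i + j) \<and> i + j > 1}. \<alpha> (i, j) * legP i \<tau> * legP j (1 - \<sigma>))"
    proof (rule infsum_cong)
      fix x assume "x \<in> {(i, j). even (i + j) \<and> i + j > (1::nat)}"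
      then obtain i j where x: "x = (i, j)" and e: "even (i + j)" by auto
      have "(-1::real)^i = (-1)^j"
        using e by (cases "even i") (auto simp: minus_one_power_iff)
      then show "(case x of (i, j) \<Rightarrow> \<alpha> (i, j) * legP i (1 - \<tau>) * legP j \<sigma>) =
                 (case x of (i, j) \<Rightarrow> \<alpha> (i, j) * legP i \<tau> * legP j (1 - \<sigma>))"
        by (simp add: x legP_refl)
    qed
    have s3: "sqrt 3 * (sqrt 3 * x) = 3 * x" for x :: real by (simp add: mult.assoc[symmetric])
    show ?thesis
      unfolding Aform[OF t' s] Aform[OF t s'] S legP1 xi1
      by (simp add: field_simps s3)
  qed
  have one: "csRKN_step Abar (\<lambda>\<tau>. 1 - \<tau>) (\<lambda>\<tau>. 1) (\<lambda>\<tau>. \<tau>) f (t0 + h) (- h) q1 p1 q0 p0"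
    if "csRKN_step Abar (\<lambda>\<tau>. 1 - \<tau>) (\<lambda>\<tau>. 1) (\<lambda>\<tau>. \<tau>) f t0 h q0 p0 q1 p1" for t0 h q0 p0 q1 p1
    by (rule step_rev[OF sym that]) auto
  show ?thesis unfolding csRKN_symmetric_def
  proof (intro allI iffI)
    fix t0 h q0 p0 q1 p1
    assume "csRKN_step Abar (\<lambda>\<tau>. 1 - \<tau>) (\<lambda>\<tau>. 1) (\<lambda>\<tau>. \<tau>) f (t0 + h) (- h) q1 p1 q0 p0"
    from one[OF this] show "csRKN_step Abar (\<lambda>\<tau>. 1 - \<tau>) (\<lambda>\<tau>. 1) (\<lambda>\<tau>. \<tau>) f t0 h q0 p0 q1 p1" by simp
  qed (rule one)
qed

end
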